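(* Let $\mathcal{X}$ be a tape category with generating object $X$, and let $T$ be a finite-state deterministic transducer with input category $\mathcal{X}$, structure functor $F$, primary input signature $X\to X$ and (output) state space $S(F(X))$, and no auxiliary inputs or output signatures. Fix a finite set of morphisms $g_1,\dots,g_n:X\to X$ in the freely-generated $\mathbb{N}^2$-filtered category over $\mathcal{X}$ with a single generating signature $X\to X$ of degree $x$, such that the generator appears at most once in each $g_i$ (i.e. the linear coefficient of $\deg g_i$ is at most $1$). Suppose a morphism $g:X\to X$ is constructed by starting with $g=\mathrm{id}_X$ and performing finitely many steps, each of which replaces $g$ by some $g_i$ with $g$ substituted for the generator. Then, for a given starting state, the state $S(F(g))$ reached can be computed, processing the construction steps one at a time, using an amount of memory that is $O(1)$ in the degree of $g$.
   Context: A filtered-morphism category is a locally small symmetric monoidal (copy-discard) category in which every morphism $f$ has a degree $\deg(f)\in\mathbb{N}$, identities have degree $0$, and $\deg(g\circ f)\le\deg(g)+\deg(f)$. A tape category is a filtered-morphism copy-discard category freely generated over a single object $X$ and finitely many morphisms of the form $X^m\to X^n$ (superscripts denote monoidal powers), each generator having positive degree. Given a filtered-morphism category $\mathcal{C}$ and a signature $X\to X$ of degree $x$, the freely-generated $\mathbb{N}^2$-filtered category over $\mathcal{C}$ with that generator consists of morphisms built by composing/tensoring $\mathcal{C}$-morphisms with a free generator $X\to X$, with degree a linear polynomial whose linear coefficient counts occurrences of the generator and whose constant term is the sum of degrees of the $\mathcal{C}$-parts. The filtered state category $\mathcal{D}^S$ of a filtered-morphism category $\mathcal{D}$: objects $A$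 are sets $S(A)$ with, for each state, a finite list of variables (pairs of $\mathcal{D}$-objects with degrees $ax+b$); a morphism $f:A\to B$ is a function $S(f):S(A)\to S(B)$ with output functions assigning to each variable at $S(f)(s)$ a morphism in the free category over $\mathcal{D}$ generated by the variables at $s$, with degree constraints; the monoidal product multiplies state spaces and concatenates variable lists. A filtered deterministic transducer with input category $\mathcal{C}$, output category $\mathcal{D}$ and primary input signature $X\to Y$ has a strong monoidal functor $F:\mathcal{C}\to\mathcal{D}^S$ with $\deg F(\alpha)\le\deg\alpha$; on primary input $\alpha$ and input state $s\in S(F(X))$ it moves to the state $S(F(\alpha))(s)$. It is a finite-state deterministic transducer if $S(F(Z))$ is finite for every object $Z$ of the input category. *)

theory Defs
  imports Main
begin

text \<open>Syntax of morphisms of a tape category (free copy-discard category over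
one object X and generators 'g with arities X^m -> X^n), extended by one
extra generator Hole : X -> X (the free generating signature of the
N^2-filtered category over the tape category).\<close>

datatype 'g tm =
    Gen 'g
  | Hole
  | Idn nat
  | Comp "'g tm" "'g tm"   \<comment> \<open>Comp t u = t after u\<close>
  | Tens "'g tm" "'g tm"
  | Swap
  | Copy
  | Del

inductive typed :: "('g \<Rightarrow> nat \<times> nat) \<Rightarrow> 'g tm \<Rightarrow> nat \<Rightarrow> nat \<Rightarrow> bool"
  for ar where
  "typed ar (Gen a) (fst (ar a)) (snd (ar a))"
| "typed ar Hole 1 1"
| "typed ar (Idn n) n n"
| "typed ar u l m \<Longrightarrow> typed ar t m n \<Longrightarrow> typed ar (Comp t u) l n"
| "typed ar t m n \<Longrightarrow> typed ar u m' n' \<Longrightarrow> typed ar (Tens t u) (m + m') (n + n')"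
| "typed ar Swap 2 2"
| "typed ar Copy 1 2"
| "typed ar Del 1 0"

text \<open>Domain arity, computed syntactically (needed to split tensor inputs).\<close>
primrec dom_ar :: "('g \<Rightarrow> nat \<times> nat) \<Rightarrow> 'g tm \<Rightarrow> nat" where
  "dom_ar ar (Gen a) = fst (ar a)"
| "dom_ar ar Hole = 1"
| "dom_ar ar (Idn n) = n"
| "dom_ar ar (Comp t u) = dom_ar ar u"
| "dom_ar ar (Tens t u) = dom_ar ar t + dom_ar ar u"
| "dom_ar ar Swap = 2"
| "dom_ar ar Copy = 1"
| "dom_ar ar Del = 1"

primrec gens :: "'g tm \<Rightarrow> 'g set" where
  "gens (Gen a) = {a}"
| "gens Hole = {}"
| "gens (Idn n) = {}"
| "gens (Comp t u) = gens t \<union> gens u"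
| "gens (Tens t u) = gens t \<union> gens u"
| "gens Swap = {}"
| "gens Copy = {}"
| "gens Del = {}"

text \<open>Number of occurrences of the free generator (the linear coefficient
of the N^2-degree).\<close>
primrec holes :: "'g tm \<Rightarrow> nat" where
  "holes (Gen a) = 0"
| "holes Hole = 1"
| "holes (Idn n) = 0"
| "holes (Comp t u) = holes t + holes u"
| "holes (Tens t u) = holes t + holes u"
| "holes Swap = 0"
| "holes Copy = 0"
| "holes Del = 0"

primrec subst :: "'g tm \<Rightarrow> 'g tm \<Rightarrow> 'g tm" where
  "subst (Gen a) g = Gen a"
| "subst Hole g = g"
| "subst (Idn n) g = Idn n"
| "subst (Comp t u) g = Comp (subst t g) (subst u g)"
| "subst (Tens t u) g = Tens (subst t g) (subst u g)"
| "subst Swap g = Swap"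
| "subst Copy g = Copy"
| "subst Del g = Del"

definition construct :: "'g tm list \<Rightarrow> nat list \<Rightarrow> 'g tm" where
  "construct gs steps = foldl (\<lambda>g i. subst (gs ! i) g) (Idn 1) steps"

text \<open>State component S(F(-)) of the structure functor of a transducer.
With Q = S(F(X)), strong monoidality identifies S(F(X^m)) with Q^m
(lists of length m); F is then determined compositionally by the state maps
of the generators and of the structural morphisms.  The hole parameter h
interprets the free generator (irrelevant for hole-free terms).\<close>
primrec sem ::
  "('g \<Rightarrow> nat \<times> nat) \<Rightarrow> ('g \<Rightarrow> 'q list \<Rightarrow> 'q list) \<Rightarrow> ('q list \<Rightarrow> 'q list)
   \<Rightarrow> ('q list \<Rightarrow> 'q list) \<Rightarrow> ('q list \<Rightarrow> 'q list) \<Rightarrow> ('q list \<Rightarrow> 'q list)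
   \<Rightarrow> 'g tm \<Rightarrow> 'q list \<Rightarrow> 'q list" where
  "sem ar fg fsw fcp fdl h (Gen a) = fg a"
| "sem ar fg fsw fcp fdl h Hole = h"
| "sem ar fg fsw fcp fdl h (Idn n) = id"
| "sem ar fg fsw fcp fdl h (Comp t u) =
     sem ar fg fsw fcp fdl h t \<circ> sem ar fg fsw fcp fdl h u"
| "sem ar fg fsw fcp fdl h (Tens t u) =
     (\<lambda>xs. sem ar fg fsw fcp fdl h t (take (dom_ar ar t) xs)
           @ sem ar fg fsw fcp fdl h u (drop (dom_ar ar t) xs))"
| "sem ar fg fsw fcp fdl h Swap = fsw"
| "sem ar fg fsw fcp fdl h Copy = fcp"
| "sem ar fg fsw fcp fdl h Del = fdl"

end

theory Submission imports Defs begin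
lemma typed_dom: "typed ar t m n \<Longrightarrow> dom_ar ar t = m"
  by (induction rule: typed.induct) auto
lemma typed_Copy: "typed ar Copy (Suc 0) 2" using typed.intros(7) by simp
lemma typed_Del: "typed ar Del (Suc 0) 0" using typed.intros(8) by simp
lemma typed_subst: "typed ar t m n \<Longrightarrow> typed ar g 1 1 \<Longrightarrow> typed ar (subst t g) m n"
  by (induction rule: typed.induct) (simp_all add: typed.intros typed_Copy typed_Del)
lemma sem_subst: "typed ar t m n \<Longrightarrow> typed ar g 1 1 \<Longrightarrow>
   sem ar fg fsw fcp fdl h (subst t g) = sem ar fg fsw fcp fdl (sem ar fg fsw fcp fdl h g) t"
proof (induction rule: typed.induct)
  case (5 t m n u m' n')
  then have "dom_ar ar (subst t g) = dom_ar ar t" using typed_dom typed_subst by metis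
  then show ?case using 5 by simp
qed auto
lemma gens_subst: "gens (subst t g) \<subseteq> gens t \<union> gens g"
  by (induction t) auto

context
  fixes Sig :: "'g set"
    and ar :: "'g \<Rightarrow> nat \<times> nat"
    and fg :: "'g \<Rightarrow> 'q list \<Rightarrow> 'q list"
    and fsw fcp fdl :: "'q list \<Rightarrow> 'q list"
  assumes A3: "\<forall>a \<in> Sig. \<forall>xs. length xs = fst (ar a) \<longrightarrow> length (fg a xs) = snd (ar a)"
    and A4: "\<forall>xs. length xs = 2 \<longrightarrow> length (fsw xs) = 2"
    and A5: "\<forall>xs. length xs = 1 \<longrightarrow> length (fcp xs) = 2"
    and A6: "\<forall>xs. length xs = 1 \<longrightarrow> length (fdl xs) = 0"
begin

lemma sem_len: "typed ar t m n \<Longrightarrow> gens t \<subseteq> Sig \<Longrightarrow> (\<forall>ys. length ys = 1 \<longrightarrow> length (h ys) = 1)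
   \<Longrightarrow> length xs = m \<Longrightarrow> length (sem ar fg fsw fcp fdl h t xs) = n"
proof (induction arbitrary: xs rule: typed.induct)
  case (1 a)
  then show ?case using A3 by simp
next
  case (4 u l m t n)
  then show ?case by simp
next
  case (5 t m n u m' n')
  then show ?case using typed_dom[OF 5(1)] by simp
qed (use A4 A5 A6 in simp_all)

lemma sem_cong: "typed ar t m n \<Longrightarrow> gens t \<subseteq> Sig \<Longrightarrow> (\<forall>ys. length ys = 1 \<longrightarrow> length (h ys) = 1)
   \<Longrightarrow> (\<forall>ys. length ys = 1 \<longrightarrow> h ys = h' ys)
   \<Longrightarrow> length xs = m \<Longrightarrow> sem ar fg fsw fcp fdl h t xs = sem ar fg fsw fcp fdl h' t xs"
proof (induction arbitrary: xs rule: typed.induct)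
  case (4 u l m t n)
  have "length (sem ar fg fsw fcp fdl h u xs) = m"
    using sem_len[OF 4(1)] 4 by simp
  then show ?case using 4 by simp
next
  case (5 t m n u m' n')
  then show ?case using typed_dom[OF 5(1)] by simp
qed simp_all

end

lemma len1: "length ys = Suc 0 \<Longrightarrow> ys = [hd ys]"
  by (cases ys) auto
lemma fin_fun_UNIV:
  assumes "finite (UNIV :: 'a set)"
  shows "finite (UNIV :: ('a \<Rightarrow> 'a) set)"
proof (rule finite_imageD)
  let ?graph = "\<lambda>f::'a \<Rightarrow> 'a. {(x, y). y = f x}"
  have "finite (Pow (UNIV :: ('a \<times> 'a) set))"
    using finite_Prod_UNIV[OF assms assms] by (simp only: finite_Pow_iff)
  then show "finite (range ?graph)" by (rule finite_subset[rotated]) simp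
  show "inj ?graph" by (rule inj_graph)
qed

theorem lemma3p19:
  fixes Sig :: "'g set"
    and ar :: "'g \<Rightarrow> nat \<times> nat"
    and fg :: "'g \<Rightarrow> 'q list \<Rightarrow> 'q list"
    and fsw fcp fdl :: "'q list \<Rightarrow> 'q list"
    and gs :: "'g tm list"
  assumes "finite Sig"
    and "finite (UNIV :: 'q set)"
    and "\<forall>a \<in> Sig. \<forall>xs. length xs = fst (ar a) \<longrightarrow> length (fg a xs) = snd (ar a)"
    and "\<forall>xs. length xs = 2 \<longrightarrow> length (fsw xs) = 2"
    and "\<forall>xs. length xs = 1 \<longrightarrow> length (fcp xs) = 2"
    and "\<forall>xs. length xs = 1 \<longrightarrow> length (fdl xs) = 0"
    and "\<forall>i < length gs. typed ar (gs ! i) 1 1 \<and> gens (gs ! i) \<subseteq> Sig \<and> holes (gs ! i) \<le> 1"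
  shows "\<exists>(M :: nat set) (init :: 'q \<Rightarrow> nat) (step :: nat \<Rightarrow> nat \<Rightarrow> nat) (out :: nat \<Rightarrow> 'q list).
           finite M \<and> (\<forall>s. init s \<in> M) \<and>
           (\<forall>m \<in> M. \<forall>i < length gs. step m i \<in> M) \<and>
           (\<forall>steps s. set steps \<subseteq> {..<length gs} \<longrightarrow>
              out (foldl step (init s) steps)
                = sem ar fg fsw fcp fdl id (construct gs steps) [s])"
proof -
  let ?S = "sem ar fg fsw fcp fdl"
  have finT: "finite (UNIV :: ('q \<times> ('q \<Rightarrow> 'q)) set)"
    using assms(2) by (simp add: finite_Prod_UNIV fin_fun_UNIV)
  then obtain enc :: "'q \<times> ('q \<Rightarrow> 'q) \<Rightarrow> nat" and N where encN: "enc ` UNIV = {i. i < N}" "inj enc"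
    using finite_imp_inj_to_nat_seg[OF finT] by blast
  define dec where "dec = inv enc"
  have dec_enc: "dec (enc p) = p" for p using encN(2) by (simp add: dec_def)
  define phi where "phi G = (\<lambda>q. hd (?S id G [q]))" for G
  define stepT where "stepT p i = (fst p, \<lambda>q. hd (?S (\<lambda>ys. [snd p (hd ys)]) (gs ! i) [q]))"
    for p :: "'q \<times> ('q \<Rightarrow> 'q)" and i
  define init where "init s = enc (s, id)" for s
  define step where "step m i = enc (stepT (dec m) i)" for m i
  define out where "out m = [snd (dec m) (fst (dec m))]" for m
  have gsi: "typed ar (gs ! i) 1 1" "gens (gs ! i) \<subseteq> Sig" if "i < length gs" for i
    using assms(7) that by auto
  have tyc: "typed ar (construct gs steps) 1 1 \<and> gens (construct gs steps) \<subseteq> Sig"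
    if "set steps \<subseteq> {..<length gs}" for steps
    using that
  proof (induction steps rule: rev_induct)
    case Nil
    have "typed ar (Idn 1) 1 1" by (rule typed.intros)
    then show ?case by (simp add: construct_def)
  next
    case (snoc i steps)
    then have i: "i < length gs" and st: "set steps \<subseteq> {..<length gs}" by auto
    have IH: "typed ar (construct gs steps) 1 1" "gens (construct gs steps) \<subseteq> Sig"
      using snoc.IH[OF st] by auto
    have c: "construct gs (steps @ [i]) = subst (gs ! i) (construct gs steps)"
      by (simp add: construct_def)
    have "typed ar (subst (gs ! i) (construct gs steps)) 1 1"
      by (rule typed_subst[OF gsi(1)[OF i] IH(1)])
    moreover have "gens (subst (gs ! i) (construct gs steps)) \<subseteq> Sig"
      using gens_subst[of "gs ! i" "construct gs steps"] gsi(2)[OF i] IH(2) by blast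
    ultimately show ?case unfolding c by simp
  qed
  have lenG: "length (?S id (construct gs steps) [q]) = 1"
    if "set steps \<subseteq> {..<length gs}" for steps q
  proof (rule sem_len[OF assms(3-6)])
    show "typed ar (construct gs steps) 1 1" using tyc[OF that] by simp
    show "gens (construct gs steps) \<subseteq> Sig" using tyc[OF that] by simp
  qed simp_all
  have valG: "?S id (construct gs steps) [q] = [phi (construct gs steps) q]"
    if "set steps \<subseteq> {..<length gs}" for steps q
    using len1[of "?S id (construct gs steps) [q]"] lenG[OF that, of q] unfolding phi_def by simp
  have inv: "foldl step (init s) steps = enc (s, phi (construct gs steps))"
    if "set steps \<subseteq> {..<length gs}" for steps s
    using that
  proof (induction steps rule: rev_induct)
    case Nil
    have "phi (Idn 1) = id" by (simp add: phi_def fun_eq_iff)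
    then show ?case by (simp add: construct_def init_def id_def)
  next
    case (snoc i steps)
    then have i: "i < length gs" and st: "set steps \<subseteq> {..<length gs}" by auto
    have IH: "foldl step (init s) steps = enc (s, phi (construct gs steps))"
      using snoc.IH[OF st] .
    let ?G = "construct gs steps"
    have c: "construct gs (steps @ [i]) = subst (gs ! i) ?G"
      by (simp add: construct_def)
    have h2: "\<forall>ys. length ys = 1 \<longrightarrow> ?S id ?G ys = [phi ?G (hd ys)]"
    proof (intro allI impI)
      fix ys :: "'q list" assume "length ys = 1"
      then have "ys = [hd ys]" using len1 by simp
      then show "?S id ?G ys = [phi ?G (hd ys)]" using valG[OF st, of "hd ys"] by metis
    qed
    have h1: "\<forall>ys. length ys = 1 \<longrightarrow> length (?S id ?G ys) = 1"
      using h2 by simp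
    have "phi (construct gs (steps @ [i])) = (\<lambda>q. hd (?S (\<lambda>ys. [phi ?G (hd ys)]) (gs ! i) [q]))"
    proof
      fix q
      have "?S id (subst (gs ! i) ?G) [q] = ?S (?S id ?G) (gs ! i) [q]"
        by (subst sem_subst[OF gsi(1)[OF i] conjunct1[OF tyc[OF st]]]) (rule refl)
      also have "\<dots> = ?S (\<lambda>ys. [phi ?G (hd ys)]) (gs ! i) [q]"
        by (rule sem_cong[OF assms(3-6) gsi(1)[OF i] gsi(2)[OF i] h1 h2]) simp
      finally show "phi (construct gs (steps @ [i]) ) q = hd (?S (\<lambda>ys. [phi ?G (hd ys)]) (gs ! i) [q])"
        unfolding c phi_def by simp
    qed
    moreover have "foldl step (init s) (steps @ [i]) = step (foldl step (init s) steps) i"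
      by simp
    ultimately show ?case unfolding IH step_def dec_enc stepT_def by simp
  qed
  show ?thesis
  proof (intro exI conjI allI impI ballI)
    show "finite (enc ` UNIV)" using encN by simp
    show "init s \<in> enc ` UNIV" for s by (simp add: init_def)
    show "step m i \<in> enc ` UNIV" for m i by (simp add: step_def)
    fix steps s assume st: "set steps \<subseteq> {..<length gs}"
    show "out (foldl step (init s) steps) = ?S id (construct gs steps) [s]"
      unfolding inv[OF st] valG[OF st] out_def dec_enc by simp
  qed
qed

end
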